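(* For every integer $n\ge 0$, \[ \sum_{k=0}^{n}(-4)^k\frac{\binom{n}{k}}{\binom{2k}{k}}\,k^2H_{2k} =\frac{n(2n+1)\{2H_{2n}-H_n\}}{(2n-1)(2n-3)(2n-5)}-\frac{n(96n^4-280n^3+60n^2+182n-13)}{(2n-1)^2(2n-3)^2(2n-5)^2}. \]
   Context: For an integer $m\ge 0$, $H_m$ denotes the $m$-th harmonic number: $H_0=0$ and $H_m=\sum_{j=1}^m \frac1j$ for $m\ge1$. $\binom{n}{k}$ is the usual binomial coefficient. *)

theory Defs
  imports "HOL-Analysis.Analysis"
begin

end

theory Submission
  imports Defs
begin

definition tt :: "nat \<Rightarrow> nat \<Rightarrow> real" where
  "tt n k = (-4::real)^k * (real (n choose k) / real ((2*k) choose k))"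

lemma binom_step: "Suc k * (n choose Suc k) = (n - k) * (n choose k)"
proof (cases n)
  case 0 then show ?thesis by simp
next
  case (Suc m)
  have "Suc k * (n choose Suc k) = n * ((n - 1) choose k)"
    using times_binomial_minus1_eq[of "Suc k" n] by simp
  also have "\<dots> = (n - k) * (n choose k)" using binomial_absorb_comp[of n k] by simp
  finally show ?thesis .
qed

lemma central_step: "real (Suc k) * real ((2*Suc k) choose Suc k) = 2 * real (2*k+1) * real ((2*k) choose k)"
proof -
  have le1: "Suc k \<le> 2*Suc k" by simp
  have h1: "Suc (Suc (2*k)) - Suc k = Suc k" by simp
  have h3: "2*Suc k = Suc (Suc (2*k))" by simp
  have a: "real ((2*Suc k) choose Suc k) = fact (Suc (Suc (2*k))) / (fact (Suc k) * fact (Suc k))"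
    using binomial_fact[OF le1, where 'a=real] by (simp only: h1 h3)
  have le2: "k \<le> 2*k" by simp
  have h2: "2*k - k = k" by simp
  have b: "real ((2*k) choose k) = fact (2*k) / (fact k * fact k)"
    using binomial_fact[OF le2, where 'a=real] by (simp only: h2)
  have f1: "(fact (Suc (Suc (2*k)))::real) = (2*real k+2)*(2*real k+1)*fact (2*k)"
    by (simp only: fact_Suc of_nat_Suc) (simp add: algebra_simps)
  have f2: "(fact (Suc k)::real) = (real k+1)*fact k" by (simp add: algebra_simps)
  have fk: "(fact k::real) > 0" by simp
  have g: "real (Suc k) * (((2*real k+2)*(2*real k+1)*F2) / ((real k+1)*F * ((real k+1)*F))) = 2*(2*real k+1)*(F2/(F*F))"
    if "F \<noteq> 0" for F F2 :: real
  proof -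
    have "real k + 1 \<noteq> 0" by arith
    then show ?thesis using that by (simp add: divide_simps; algebra)
  qed
  have "real (Suc k) * real ((2*Suc k) choose Suc k)
      = real (Suc k) * (((2*real k+2)*(2*real k+1)*fact (2*k)) / ((real k+1)*fact k * ((real k+1)*fact k)))"
    unfolding a f1 f2 by (rule refl)
  also have "\<dots> = 2*(2*real k+1)*(fact (2*k)/(fact k*fact k))" by (rule g) simp
  also have "\<dots> = 2 * real (2*k+1) * real ((2*k) choose k)" unfolding b by simp
  finally show ?thesis .
qed

lemma tt_rec: "real (2*k+1) * tt n (Suc k) = -2 * (real n - real k) * tt n k"
proof -
  have cpos: "real ((2*k) choose k) > 0" by simp
  have cpos2: "real ((2*Suc k) choose Suc k) > 0" by (simp del: mult_Suc_right)
  have e1: "real (Suc k) * real (n choose Suc k) = (real n - real k) * real (n choose k)"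
  proof (cases "k \<le> n")
    case True
    then show ?thesis using binom_step[of k n] by (metis of_nat_diff of_nat_mult)
  next
    case False then show ?thesis by (simp add: binomial_eq_0)
  qed
  have "real (2*k+1) * tt n (Suc k) * (real (Suc k) * real ((2*Suc k) choose Suc k))
     = real (2*k+1) * (-4)^Suc k * (real (Suc k) * real (n choose Suc k))"
    unfolding tt_def using cpos2 by (simp add: field_simps)
  also have "\<dots> = real (2*k+1) * (-4)^Suc k * ((real n - real k) * real (n choose k))"
    using e1 by simp
  also have "\<dots> = -2 * (real n - real k) * tt n k * (real (Suc k) * real ((2*Suc k) choose Suc k))"
    unfolding central_step tt_def using cpos by (simp add: field_simps)
  finally show ?thesis using cpos2 by (simp del: of_nat_Suc mult_Suc_right)
qed

lemma tt_top: "tt n (Suc n) = 0" by (simp add: tt_def)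
lemma tt_0: "tt n 0 = 1" by (simp add: tt_def)

lemma tele_poly:
  fixes f :: "nat \<Rightarrow> real"
  shows "(\<Sum>k=0..n. tt n k * (-2*(real n - real k)* f (Suc k) - (2*real k - 1)* f k)) = f 0"
proof -
  define G where "G k = tt n k * (2*real k - 1) * f k" for k
  have "(\<Sum>k=0..n. tt n k * (-2*(real n - real k)* f (Suc k) - (2*real k - 1)* f k))
      = (\<Sum>k=0..n. G (Suc k) - G k)"
  proof (rule sum.cong[OF refl])
    fix k
    have "G (Suc k) = (real (2*k+1) * tt n (Suc k)) * f (Suc k)" unfolding G_def by (simp add: algebra_simps)
    also have "\<dots> = -2 * (real n - real k) * tt n k * f (Suc k)" by (simp only: tt_rec)
    finally show "tt n k * (-2*(real n - real k)* f (Suc k) - (2*real k - 1)* f k) = G (Suc k) - G k"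
      unfolding G_def by (simp add: algebra_simps)
  qed
  also have "\<dots> = G (Suc n) - G 0" by (rule sum_Suc_diff) simp
  also have "\<dots> = f 0" unfolding G_def by (simp add: tt_top tt_0)
  finally show ?thesis .
qed

lemma harm2: "harm (2*Suc k) = (harm (2*k) :: real) + 1/(2*real k+1) + 1/(2*real k+2)"
proof -
  have "2*Suc k = Suc (Suc (2*k))" by simp
  then show ?thesis by (simp add: harm_Suc field_simps)
qed

lemma tele_harm:
  fixes f :: "nat \<Rightarrow> real"
  shows "(\<Sum>k=0..n. tt n k * (-2*(real n - real k)* f (Suc k) - (2*real k - 1)* f k) * harm (2*k))
     + (\<Sum>k=0..n. tt n (Suc k) * f (Suc k) * ((4*real k+3)/(2*real k+2))) = 0"
proof -
  define G where "G k = tt n k * (2*real k - 1) * f k * harm (2*k)" for k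
  have "(\<Sum>k=0..n. tt n k * (-2*(real n - real k)* f (Suc k) - (2*real k - 1)* f k) * harm (2*k))
     + (\<Sum>k=0..n. tt n (Suc k) * f (Suc k) * ((4*real k+3)/(2*real k+2)))
      = (\<Sum>k=0..n. G (Suc k) - G k)"
    unfolding sum.distrib[symmetric]
  proof (rule sum.cong[OF refl])
    fix k
    have r: "real (2*k+1) * tt n (Suc k) = -2 * (real n - real k) * tt n k" by (rule tt_rec)
    define A where "A = 1/(2*real k+1) + 1/(2*real k+2)"
    have h: "harm (2*Suc k) = harm (2*k) + A" unfolding A_def harm2 by simp
    have e: "real (2*Suc k) - 1 = real (2*k+1)" by simp
    have "G (Suc k) = (real (2*k+1) * tt n (Suc k)) * f (Suc k) * harm (2*k)
        + tt n (Suc k) * f (Suc k) * ((2*real k+1) * A)"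
      unfolding G_def h e by (simp add: ring_distribs)
    also have "(2*real k+1) * A = (4*real k+3)/(2*real k+2)"
    proof -
      have "2*real k+1 \<noteq> 0" "2*real k+2 \<noteq> 0" by linarith+
      then have "(2*real k+1)*A = 1 + (2*real k+1)/(2*real k+2)" unfolding A_def by (simp add: ring_distribs)
      also have "\<dots> = (4*real k+3)/(2*real k+2)" using \<open>2*real k+2 \<noteq> 0\<close> by (simp add: field_simps)
      finally show ?thesis .
    qed
    finally show "tt n k * (-2*(real n - real k)* f (Suc k) - (2*real k - 1)* f k) * harm (2*k)
       + tt n (Suc k) * f (Suc k) * ((4*real k+3)/(2*real k+2)) = G (Suc k) - G k"
      unfolding r G_def by (simp add: algebra_simps)
  qed
  also have "\<dots> = G (Suc n) - G 0" by (rule sum_Suc_diff) simp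
  also have "\<dots> = 0" unfolding G_def by (simp add: tt_top tt_0 harm_def)
  finally show ?thesis .
qed

lemma r0D_lemma:
  fixes x :: real
  assumes "2*x - 1 \<noteq> 0" "2*x - 3 \<noteq> 0" "2*x - 5 \<noteq> 0" "1 - 2*x \<noteq> 0" "3 - 2*x \<noteq> 0" "5 - 2*x \<noteq> 0"
  shows "(4*x*(1+2*x)/(5-2*x) - x*(11-18*x)/(3-2*x) + 2*x*(12*x^2+1)/(1-2*x)) / ((5-2*x)*(3-2*x)*(1-2*x)) = x * (96*x^4 - 280*x^3 + 60*x^2 + 182*x - 13) / ((2*x - 1)^2 * (2*x - 3)^2 * (2*x - 5)^2)"
  using assms by (simp add: divide_simps; algebra)

lemma lin_comb:
  "(\<Sum>k=0..n. tt n k * (A*real k^2 + B*real k + C)) =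
     A*(\<Sum>k=0..n. tt n k * real k^2) + B*(\<Sum>k=0..n. tt n k * real k) + C*(\<Sum>k=0..n. tt n k)"
  by (simp add: sum.distrib sum_distrib_left ring_distribs mult_ac)

lemma C0: "(\<Sum>k=0..n. tt n k) * (1 - 2*real n) = 1"
proof -
  have "(\<Sum>k=0..n. tt n k * (-2*(real n - real k)* (\<lambda>_. 1::real) (Suc k) - (2*real k - 1)* (\<lambda>_. 1) k)) = 1"
    by (rule tele_poly)
  also have "(\<Sum>k=0..n. tt n k * (-2*(real n - real k)* (\<lambda>_. 1::real) (Suc k) - (2*real k - 1)* (\<lambda>_. 1) k))
     = (\<Sum>k=0..n. tt n k * (0*real k^2 + 0*real k + (1 - 2*real n)))"
    by (rule sum.cong) (simp_all add: algebra_simps)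
  finally show ?thesis unfolding lin_comb by (simp add: algebra_simps)
qed

lemma C1: "(\<Sum>k=0..n. tt n k * real k) * (3 - 2*real n) - 2*real n * (\<Sum>k=0..n. tt n k) = 0"
proof -
  have "(\<Sum>k=0..n. tt n k * (-2*(real n - real k)* (\<lambda>k. real k) (Suc k) - (2*real k - 1)* (\<lambda>k. real k) k)) = 0"
    using tele_poly[of n "\<lambda>k. real k"] by simp
  also have "(\<Sum>k=0..n. tt n k * (-2*(real n - real k)* (\<lambda>k. real k) (Suc k) - (2*real k - 1)* (\<lambda>k. real k) k))
     = (\<Sum>k=0..n. tt n k * (0*real k^2 + (3 - 2*real n)*real k + (-2*real n)))"
    by (rule sum.cong) (simp_all add: algebra_simps power2_eq_square)
  finally show ?thesis unfolding lin_comb by (simp add: algebra_simps)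
qed

lemma C2: "(\<Sum>k=0..n. tt n k * real k^2) * (5 - 2*real n) + (2 - 4*real n) * (\<Sum>k=0..n. tt n k * real k) - 2*real n * (\<Sum>k=0..n. tt n k) = 0"
proof -
  have "(\<Sum>k=0..n. tt n k * (-2*(real n - real k)* (\<lambda>k. real k^2) (Suc k) - (2*real k - 1)* (\<lambda>k. real k^2) k)) = 0"
    using tele_poly[of n "\<lambda>k. real k^2"] by simp
  also have "(\<Sum>k=0..n. tt n k * (-2*(real n - real k)* (\<lambda>k. real k^2) (Suc k) - (2*real k - 1)* (\<lambda>k. real k^2) k))
     = (\<Sum>k=0..n. tt n k * ((5 - 2*real n)*real k^2 + (2 - 4*real n)*real k + (-2*real n)))"
    by (rule sum.cong) (simp_all add: algebra_simps power2_eq_square)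
  finally show ?thesis unfolding lin_comb by (simp add: algebra_simps)
qed

lemma odd_ne: "odd (m::nat) \<Longrightarrow> 2*real n \<noteq> real m"
proof
  assume "odd m" "2*real n = real m"
  then have "2*n = m" by linarith
  with \<open>odd m\<close> show False by auto
qed

lemma two_n_ne: "2*real n - 1 \<noteq> 0" "2*real n - 3 \<noteq> 0" "2*real n - 5 \<noteq> 0"
    "1 - 2*real n \<noteq> 0" "3 - 2*real n \<noteq> 0" "5 - 2*real n \<noteq> 0"
proof -
  have a: "2*real n \<noteq> 1" using odd_ne[of 1 n] by simp
  have b: "2*real n \<noteq> 3" using odd_ne[of 3 n] by simp
  have c: "2*real n \<noteq> 5" using odd_ne[of 5 n] by simp
  show "2*real n - 1 \<noteq> 0" "2*real n - 3 \<noteq> 0" "2*real n - 5 \<noteq> 0"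
    "1 - 2*real n \<noteq> 0" "3 - 2*real n \<noteq> 0" "5 - 2*real n \<noteq> 0" using a b c by linarith+
qed

lemma C0': "(\<Sum>k=0..n. tt n k) = 1 / (1 - 2*real n)"
proof -
  have "(\<Sum>k=0..n. tt n k) = (\<Sum>k=0..n. tt n k) * (1 - 2*real n) / (1 - 2*real n)"
    by (rule nonzero_mult_div_cancel_right[symmetric]) (rule two_n_ne(4))
  also have "\<dots> = 1 / (1 - 2*real n)" by (simp only: C0)
  finally show ?thesis .
qed

lemma aux_frac:
  fixes a b j m X Y :: real
  assumes "j*(a+b) = m*a" "j \<noteq> 0" "m \<noteq> 0" "Y \<noteq> 0"
  shows "X*((a+b)/Y)/j = X*(b/Y)/j + X*((a+b)/Y)/m"
proof -
  have "X*((a+b)/Y)/j - X*(b/Y)/j - X*((a+b)/Y)/m = X/Y * (a/j - (a+b)/m)"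
    using assms(2-4) by (simp add: field_simps)
  also have "a/j - (a+b)/m = (m*a - j*(a+b))/(j*m)" using assms(2-4) by (simp add: field_simps)
  also have "\<dots> = 0" using assms(1) by simp
  finally show ?thesis by simp
qed

lemma pascal_tt: "tt (Suc n) (Suc k) / real (Suc k) = tt n (Suc k) / real (Suc k) + tt (Suc n) (Suc k) / real (Suc n)"
proof -
  have p: "real (Suc n choose Suc k) = real (n choose k) + real (n choose Suc k)" by simp
  have q: "real (Suc k) * real (Suc n choose Suc k) = real (Suc n) * real (n choose k)"
    using Suc_times_binomial[of k n] by (metis of_nat_mult)
  have Y: "real ((2*Suc k) choose Suc k) \<noteq> 0" by (simp del: mult_Suc_right)
  show ?thesis unfolding tt_def p
    by (rule aux_frac) (use q p Y in simp_all)
qed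

lemma Bsum: "(\<Sum>k<n. tt n (Suc k) / real (Suc k)) = harm n - 2*harm (2*n)"
proof (induction n)
  case 0 then show ?case by (simp add: harm_def)
next
  case (Suc n)
  have "(\<Sum>k<Suc n. tt (Suc n) (Suc k) / real (Suc k))
     = (\<Sum>k<Suc n. tt n (Suc k) / real (Suc k)) + (\<Sum>k<Suc n. tt (Suc n) (Suc k)) / real (Suc n)"
    by (simp only: pascal_tt sum.distrib sum_divide_distrib)
  also have "(\<Sum>k<Suc n. tt n (Suc k) / real (Suc k)) = harm n - 2*harm (2*n)"
    using Suc.IH by (simp add: tt_top)
  also have "(\<Sum>k<Suc n. tt (Suc n) (Suc k)) = (\<Sum>k=0..Suc n. tt (Suc n) k) - 1"
    unfolding atLeast0AtMost sum.atMost_Suc_shift lessThan_Suc_atMost by (simp add: tt_0)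
  also have "\<dots> = 1/(1 - 2*real (Suc n)) - 1" by (simp only: C0')
  finally have e: "(\<Sum>k<Suc n. tt (Suc n) (Suc k) / real (Suc k)) = harm n - 2*harm (2*n) + (1/(1 - 2*real (Suc n)) - 1) / real (Suc n)" .
  have h1: "harm (Suc n) = harm n + 1/real (Suc n)" by (simp add: harm_Suc field_simps)
  have h2: "harm (2*Suc n) = harm (2*n) + 1/(2*real n+1) + 1/(2*real n+2)" by (rule harm2)
  have nz: "1 - 2*real (Suc n) \<noteq> 0" "2*real n+1 \<noteq> 0" "2*real n+2 \<noteq> 0" "real (Suc n) \<noteq> 0"
    using two_n_ne(4)[of "Suc n"] by auto
  have y: "1/(y+1) - 2*(1/(2*y+1)+1/(2*y+2)) = (-1/(2*y+1) - 1)/(y+1)" if "y \<ge> 0" for y :: real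
  proof -
    have nz: "y+1 \<noteq> 0" "2*y+1 \<noteq> 0" "2*y+2 \<noteq> 0" using that by (smt (verit))+
    have "2*(1/(2*y+2)) = 1/(y+1)" using nz by (simp add: divide_simps)
    then have "1/(y+1) - 2*(1/(2*y+1)+1/(2*y+2)) = -2/(2*y+1)" by (simp add: ring_distribs)
    also have "\<dots> = (-1/(2*y+1) - 1)/(y+1)" using nz by (simp add: divide_simps; simp add: algebra_simps)
    finally show ?thesis .
  qed
  have s1: "real (Suc n) = real n + 1" by simp
  have s2: "1/(1 - 2*real (Suc n)) = -1/(2*real n+1)"
  proof -
    have "2*real n+1 \<noteq> 0" by arith
    then show ?thesis by (simp add: divide_simps; algebra)
  qed
  show ?case unfolding e h1 h2 s2 unfolding s1 y[of "real n", OF of_nat_0_le_iff, symmetric] by (simp add: algebra_simps)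
qed

theorem theorem3:
  fixes n :: nat
  shows "(\<Sum>k=0..n. (-4::real)^k * (real (n choose k) / real ((2*k) choose k))
            * (real k)^2 * harm (2*k))
       = real n * (2*real n + 1) * (2 * harm (2*n) - harm n)
           / ((2*real n - 1) * (2*real n - 3) * (2*real n - 5))
         - real n * (96*real n^4 - 280*real n^3 + 60*real n^2 + 182*real n - 13)
           / ((2*real n - 1)^2 * (2*real n - 3)^2 * (2*real n - 5)^2)"
proof -
  define x where "x = real n"
  define a where "a = (3-2*x)*(1-2*x)"
  define b where "b = -2*(1-2*x)^2"
  define c where "c = 2*x*(1+2*x)"
  define D where "D = (5-2*x)*(3-2*x)*(1-2*x)"
  define sf where "sf k = a*real k^2 + b*real k + c" for k
  define q where "q k = (2*a)*real k^2 + ((4*b-a)/2)*real k + (2*c - b/2)" for k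
  define S where "S = (\<Sum>k=0..n. tt n k * real k^2 * harm (2*k))"
  define C0 where "C0 = (\<Sum>k=0..n. tt n k)"
  define C1 where "C1 = (\<Sum>k=0..n. tt n k * real k)"
  define C2 where "C2 = (\<Sum>k=0..n. tt n k * real k^2)"
  define B where "B = (\<Sum>k<n. tt n (Suc k) / real (Suc k))"
  define R where "R = (\<Sum>k=0..n. tt n (Suc k) * sf (Suc k) * ((4*real k+3)/(2*real k+2)))"
  have LHS: "(\<Sum>k=0..n. (-4::real)^k * (real (n choose k) / real ((2*k) choose k))
            * (real k)^2 * harm (2*k)) = S" unfolding S_def tt_def by simp
  have th: "(\<Sum>k=0..n. tt n k * (-2*(real n - real k)* sf (Suc k) - (2*real k - 1)* sf k) * harm (2*k)) + R = 0"
    unfolding R_def by (rule tele_harm)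
  have "(\<Sum>k=0..n. tt n k * (-2*(real n - real k)* sf (Suc k) - (2*real k - 1)* sf k) * harm (2*k)) = D * S"
    unfolding S_def sum_distrib_left
  proof (rule sum.cong[OF refl])
    fix k
    have "-2*(real n - real k)* sf (Suc k) - (2*real k - 1)* sf k = D * real k^2"
      unfolding sf_def D_def a_def b_def c_def x_def by (simp add: algebra_simps power2_eq_square)
    then show "tt n k * (-2*(real n - real k)* sf (Suc k) - (2*real k - 1)* sf k) * harm (2*k)
      = D * (tt n k * real k^2 * harm (2*k))" by simp
  qed
  with th have DS: "D * S = - R" by simp
  have "R = (\<Sum>k=0..n. tt n (Suc k) * q (Suc k) - c/2 * (tt n (Suc k) / real (Suc k)))"
    unfolding R_def
  proof (rule sum.cong[OF refl])
    fix k
    have nz: "2*real k+2 \<noteq> 0" "real k + 1 \<noteq> 0" by linarith+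
    have "sf (Suc k) * ((4*real k+3)/(2*real k+2)) = q (Suc k) - c/2 / real (Suc k)"
      unfolding sf_def q_def using nz by (simp add: divide_simps; simp add: algebra_simps power2_eq_square)
    then have "tt n (Suc k) * (sf (Suc k) * ((4*real k+3)/(2*real k+2))) = tt n (Suc k) * (q (Suc k) - c/2 / real (Suc k))"
      by simp
    then show "tt n (Suc k) * sf (Suc k) * ((4*real k+3)/(2*real k+2)) = tt n (Suc k) * q (Suc k) - c/2 * (tt n (Suc k) / real (Suc k))"
      by (simp add: algebra_simps)
  qed
  also have "\<dots> = (\<Sum>k=0..n. tt n (Suc k) * q (Suc k)) - c/2 * (\<Sum>k=0..n. tt n (Suc k) / real (Suc k))"
    by (simp add: sum_subtractf sum_distrib_left)
  also have "(\<Sum>k=0..n. tt n (Suc k) / real (Suc k)) = B"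
    unfolding B_def atLeast0AtMost lessThan_Suc_atMost[symmetric] by (simp add: tt_top)
  also have "(\<Sum>k=0..n. tt n (Suc k) * q (Suc k)) = (\<Sum>k=0..n. tt n k * q k) - q 0"
  proof -
    have "(\<Sum>k<Suc (Suc n). tt n k * q k) = (\<Sum>k<Suc n. tt n (Suc k) * q (Suc k)) + tt n 0 * q 0"
      by (subst sum.lessThan_Suc_shift) simp
    moreover have "(\<Sum>k<Suc (Suc n). tt n k * q k) = (\<Sum>k<Suc n. tt n k * q k)"
      by (simp add: tt_top)
    ultimately show ?thesis unfolding atLeast0AtMost lessThan_Suc_atMost[symmetric] by (simp add: tt_0)
  qed
  also have "(\<Sum>k=0..n. tt n k * q k) = (2*a)*C2 + ((4*b-a)/2)*C1 + (2*c - b/2)*C0"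
    unfolding q_def C0_def C1_def C2_def by (rule lin_comb)
  finally have R: "R = (2*a)*C2 + ((4*b-a)/2)*C1 + (2*c - b/2)*C0 - q 0 - c/2 * B" .
  have eC0: "C0 = 1/(1-2*x)" unfolding C0_def x_def by (rule C0')
  have eC1: "C1 * (3-2*x) - 2*x*C0 = 0" unfolding C0_def C1_def x_def by (rule C1)
  have eC2: "C2 * (5-2*x) + (2-4*x)*C1 - 2*x*C0 = 0" unfolding C0_def C1_def C2_def x_def by (rule C2)
  have eB: "B = harm n - 2*harm (2*n)" unfolding B_def by (rule Bsum)
  have nz: "2*x - 1 \<noteq> 0" "2*x - 3 \<noteq> 0" "2*x - 5 \<noteq> 0" "1 - 2*x \<noteq> 0" "3 - 2*x \<noteq> 0" "5 - 2*x \<noteq> 0"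
    unfolding x_def by (rule two_n_ne)+
  have eC1': "C1 = 2*x/((3-2*x)*(1-2*x))" using eC1 nz unfolding eC0 by (simp add: divide_simps; simp add: algebra_simps power2_eq_square)
  have eC2': "C2 = 2*x*(1+2*x)/D" using eC2 nz unfolding eC0 eC1' D_def by (simp add: divide_simps; simp add: algebra_simps power2_eq_square)
  have t1: "(2*a)*C2 = 4*x*(1+2*x)/(5-2*x)" unfolding eC2' a_def D_def using nz by (simp add: divide_simps; simp add: algebra_simps power2_eq_square)
  have t2: "((4*b-a)/2)*C1 = - x*(11-18*x)/(3-2*x)" unfolding eC1' a_def b_def using nz
    by (simp add: divide_simps; simp add: algebra_simps power2_eq_square)
  have q0: "q 0 = 2*c - b/2" unfolding q_def by simp
  have t3: "(2*c - b/2)*C0 - q 0 = 2*x*(12*x^2+1)/(1-2*x)" unfolding q0 eC0 b_def c_def using nz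
    by (simp add: divide_simps; simp add: algebra_simps power2_eq_square)
  define r0 where "r0 = 4*x*(1+2*x)/(5-2*x) - x*(11-18*x)/(3-2*x) + 2*x*(12*x^2+1)/(1-2*x)"
  have R2: "R = r0 - c/2*B" using R t1 t2 t3 unfolding r0_def by linarith
  have S2: "S = - (r0 / D) + x*(2*x+1)*(2*harm (2*n) - harm n)/((2*x-1)*(2*x-3)*(2*x-5))"
  proof -
    have "S = - R / D" using DS nz unfolding D_def by (simp add: divide_simps; simp add: algebra_simps power2_eq_square)
    also have "\<dots> = - (r0/D) + (c/2*B)/D" unfolding R2 by (simp add: divide_simps; simp add: algebra_simps power2_eq_square)
    also have "(c/2*B)/D = x*(2*x+1)*(2*harm (2*n) - harm n)/((2*x-1)*(2*x-3)*(2*x-5))"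
      unfolding c_def eB D_def using nz by (simp add: divide_simps; simp add: algebra_simps power2_eq_square)
    finally show ?thesis .
  qed
  have r0D: "r0 / D = x * (96*x^4 - 280*x^3 + 60*x^2 + 182*x - 13) / ((2*x - 1)^2 * (2*x - 3)^2 * (2*x - 5)^2)"
    unfolding r0_def D_def using r0D_lemma[OF nz] .
  show ?thesis unfolding LHS S2 r0D unfolding x_def by simp
qed

end
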